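(* Let $\mathcal D$ be a finite domain. If $(\sigma_r,\sigma_b)$ has law $\mu^{+,\mathrm{const}}_{\mathcal D}$, then $(\omega(\sigma_r),\omega(\sigma_b))$ is uniformly distributed on the set of pairs $(\omega_r,\omega_b)$ of loop configurations on $\mathcal D$ having no edge in common. In particular $\omega(\sigma_r)\cup\omega(\sigma_b)$ has the law $\mathbb P_{\mathcal D}$ of the loop $O(2)$ model on $\mathcal D$ with edge-weight $1$.
   Context: $\mathbb H$ is the hexagonal lattice. A domain is a subgraph $\mathcal D$ of $\mathbb H$ without isolated vertices for which there exists a self-avoiding polygon $\partial_E\mathcal D$ such that $E(\mathcal D)$ is the set of edges in the bounded component of $\mathbb H\setminus\partial_E\mathcal D$; $F(\mathcal D)$ is the set of faces adjacent to an edge of $\mathcal D$ and $\partial_{\mathrm{in}}\mathcal D$ the faces of $F(\mathcal D)$ bounded by an edge of $\partial_E\mathcal D$. A pair $(\sigma_r,\sigma_b)\in\{+,-\}^{F(\mathcal D)}\times\{+,-\}^{F(\mathcal D)}$ (red and blue spins) is coherent if for all adjacent faces $u,v\in F(\mathcal D)$, $\sigma_r(u)=\sigma_r(v)$ or $\sigma_b(u)=\sigma_b(v)$. $\mu_{\mathcal D}$ is the uniform measure on coherent pairs, and $\mu^{+,\mathrm{const}}_{\mathcal D}:=\mu_{\mathcal D}(\cdot\mid\sigma_r\equiv+\text{ on }\partial_{\mathrm{in}}\mathcal D\text{ and }\sigma_b\text{ is constant on }\partial_{\mathrm{in}}\mathcal D)$. For $\sigma\in\{+,-\}^{F(\mathcal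 D)}$, $\omega(\sigma)$ is the set of edges of $\mathcal D$ separating adjacent faces with different spins. A loop configuration on $\mathcal D$ is a subgraph of $\mathcal D$ with all degrees even, and $\mathbb P_{\mathcal D}(\omega)\propto2^{\#\text{loops of }\omega}$. *)

theory Defs
  imports "HOL-Probability.Probability_Mass_Function" "HOL-Library.FuncSet"
begin

text \<open>Model of the hexagonal lattice H via its dual, the triangular lattice.
 Faces of H are the points of Z x Z (triangular lattice).
 An edge of H is represented by the two-element set of the faces it separates;
 a vertex of H is represented by the set of the three (pairwise adjacent) faces
 meeting at it.  An edge e is incident to a vertex t iff e is a subset of t.\<close>

type_synonym face = "int \<times> int"
type_synonym hedge = "face set"
type_synonym hvertex = "face set"

definition adj :: "face \<Rightarrow> face \<Rightarrow> bool" where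
  "adj u v \<longleftrightarrow> (fst v - fst u, snd v - snd u) \<in>
     {(1,0), (-1,0), (0,1), (0,-1), (1,-1), (-1,1)}"

definition is_hedge :: "hedge \<Rightarrow> bool" where
  "is_hedge e \<longleftrightarrow> (\<exists>u v. adj u v \<and> e = {u, v})"

definition is_hvertex :: "hvertex \<Rightarrow> bool" where
  "is_hvertex t \<longleftrightarrow> card t = 3 \<and> (\<forall>u\<in>t. \<forall>v\<in>t. u \<noteq> v \<longrightarrow> adj u v)"

text \<open>Self-avoiding polygon of H: a cyclic list of k >= 3 distinct vertices,
 consecutive ones (cyclically) joined by an edge of H (the edge between two
 neighbouring vertices t, t' is t \<inter> t').\<close>

definition self_avoiding_polygon :: "hvertex list \<Rightarrow> bool" where
  "self_avoiding_polygon ps \<longleftrightarrow> length ps \<ge> 3 \<and> distinct ps \<and>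
     (\<forall>i < length ps. is_hvertex (ps ! i) \<and>
        is_hedge (ps ! i \<inter> ps ! ((i + 1) mod length ps)))"

definition polygon_edges :: "hvertex list \<Rightarrow> hedge set" where
  "polygon_edges ps = {ps ! i \<inter> ps ! ((i + 1) mod length ps) | i. i < length ps}"

text \<open>A (finite) domain is described by the finite set S of faces of H enclosed by
 its boundary polygon: the edge boundary of S (edges with exactly one side in S)
 is a self-avoiding polygon.  The edges of the domain (edges in the bounded
 component of the complement of the polygon) are those with both sides in S.\<close>

definition boundary_edges :: "face set \<Rightarrow> hedge set" where
  "boundary_edges S = {{u, v} | u v. adj u v \<and> u \<in> S \<and> v \<notin> S}"

definition is_domain :: "face set \<Rightarrow> bool" where
  "is_domain S \<longleftrightarrow> finite S \<and>
     (\<exists>ps. self_avoiding_polygon ps \<and> boundary_edges S = polygon_edges ps)"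

definition dom_edges :: "face set \<Rightarrow> hedge set" where
  "dom_edges S = {{u, v} | u v. adj u v \<and> u \<in> S \<and> v \<in> S}"

definition dom_faces :: "face set \<Rightarrow> face set" where
  "dom_faces S = {w. \<exists>e \<in> dom_edges S. w \<in> e}"

definition inner_boundary :: "face set \<Rightarrow> face set" where
  "inner_boundary S = {w \<in> dom_faces S. \<exists>e \<in> boundary_edges S. w \<in> e}"

text \<open>Spin configurations in {+,-}^F(D); + is True.\<close>
definition spins :: "face set \<Rightarrow> (face \<Rightarrow> bool) set" where
  "spins S = PiE (dom_faces S) (\<lambda>_. UNIV)"

definition coherent :: "face set \<Rightarrow> (face \<Rightarrow> bool) \<Rightarrow> (face \<Rightarrow> bool) \<Rightarrow> bool" where
  "coherent S sr sb \<longleftrightarrow> (\<forall>u \<in> dom_faces S. \<forall>v \<in> dom_faces S.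
      adj u v \<longrightarrow> sr u = sr v \<or> sb u = sb v)"

definition plus_const_configs :: "face set \<Rightarrow> ((face \<Rightarrow> bool) \<times> (face \<Rightarrow> bool)) set" where
  "plus_const_configs S = {(sr, sb). sr \<in> spins S \<and> sb \<in> spins S \<and> coherent S sr sb \<and>
      (\<forall>w \<in> inner_boundary S. sr w) \<and>
      (\<forall>w \<in> inner_boundary S. \<forall>w' \<in> inner_boundary S. sb w = sb w')}"

definition mu_plus_const :: "face set \<Rightarrow> ((face \<Rightarrow> bool) \<times> (face \<Rightarrow> bool)) pmf" where
  "mu_plus_const S = pmf_of_set (plus_const_configs S)"

definition omega :: "face set \<Rightarrow> (face \<Rightarrow> bool) \<Rightarrow> hedge set" where
  "omega S \<sigma> = {e \<in> dom_edges S. \<exists>u v. e = {u, v} \<and> \<sigma> u \<noteq> \<sigma> v}"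

text \<open>Loop configurations on D (subgraphs, given by their edge sets, with all degrees even).\<close>
definition loop_config :: "face set \<Rightarrow> hedge set \<Rightarrow> bool" where
  "loop_config S \<omega> \<longleftrightarrow> \<omega> \<subseteq> dom_edges S \<and>
     (\<forall>t. is_hvertex t \<longrightarrow> even (card {e \<in> \<omega>. e \<subseteq> t}))"

text \<open>Number of loops = number of connected components of the subgraph, i.e. of
 classes of its edges under the equivalence generated by sharing an endpoint.\<close>
definition n_loops :: "hedge set \<Rightarrow> nat" where
  "n_loops \<omega> = card (\<omega> // ({(e, e'). e \<in> \<omega> \<and> e' \<in> \<omega> \<and>
       (\<exists>t. is_hvertex t \<and> e \<subseteq> t \<and> e' \<subseteq> t)}\<^sup>*))"

definition loop_O2 :: "face set \<Rightarrow> hedge set \<Rightarrow> real" where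
  "loop_O2 S \<omega> = (if loop_config S \<omega>
     then 2 ^ n_loops \<omega> / (\<Sum>\<omega>' \<in> {\<omega>'. loop_config S \<omega>'}. 2 ^ n_loops \<omega>')
     else 0)"

definition disjoint_loop_pairs :: "face set \<Rightarrow> (hedge set \<times> hedge set) set" where
  "disjoint_loop_pairs S = {(wr, wb). loop_config S wr \<and> loop_config S wb \<and> wr \<inter> wb = {}}"

end

theory Submission
  imports Defs
begin

lemma neg6: "((x::int),(y::int)) \<in> {(1,0), (-1,0), (0,1), (0,-1), (1,-1), (-1,1)} \<Longrightarrow> (-x,-y) \<in> {(1,0), (-1,0), (0,1), (0,-1), (1,-1), (-1,1)}"
  by (simp; elim disjE; simp)
lemma z6: "((x::int),(y::int)) \<in> {(1,0), (-1,0), (0,1), (0,-1), (1,-1), (-1,1)} \<Longrightarrow> (x,y) \<noteq> (0,0)"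
  by auto
lemma adj_sym: "adj u v \<Longrightarrow> adj v u"
  unfolding adj_def using neg6 by (metis minus_diff_eq)
lemma adj_neq: "adj u v \<Longrightarrow> u \<noteq> v"
  unfolding adj_def using z6 by (metis diff_self)

lemma dom_faces_sub: "dom_faces S \<subseteq> S"
  unfolding dom_faces_def dom_edges_def by auto

lemma finite_dom_edges: "finite S \<Longrightarrow> finite (dom_edges S)"
proof -
  assume "finite S"
  have "dom_edges S \<subseteq> (\<lambda>(u,v). {u,v}) ` (S \<times> S)"
    unfolding dom_edges_def by auto
  thus ?thesis using \<open>finite S\<close> by (meson finite_SigmaI finite_imageI finite_subset)
qed

lemma finite_dom_faces: "finite S \<Longrightarrow> finite (dom_faces S)"
  using dom_faces_sub finite_subset by blast

lemma adj_dom_edge: "u \<in> dom_faces S \<Longrightarrow> v \<in> dom_faces S \<Longrightarrow> adj u v \<Longrightarrow> {u,v} \<in> dom_edges S"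
  using dom_faces_sub unfolding dom_edges_def by blast

lemma dom_edge_faces: "{u,v} \<in> dom_edges S \<Longrightarrow> u \<in> dom_faces S \<and> v \<in> dom_faces S"
  unfolding dom_faces_def by blast

lemma omega_mem: assumes "adj u v" "{u,v} \<in> dom_edges S"
  shows "{u,v} \<in> omega S \<sigma> \<longleftrightarrow> \<sigma> u \<noteq> \<sigma> v"
proof
  assume "{u,v} \<in> omega S \<sigma>"
  hence "\<exists>a b. {u,v} = {a,b} \<and> \<sigma> a \<noteq> \<sigma> b" unfolding omega_def mem_Collect_eq by (rule conjunct2)
  then obtain a b where ab: "{u,v} = {a,b}" "\<sigma> a \<noteq> \<sigma> b" by blast
  have "(u = a \<and> v = b) \<or> (u = b \<and> v = a)" using ab(1) by (simp only: doubleton_eq_iff)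
  thus "\<sigma> u \<noteq> \<sigma> v" using ab(2) by (elim disjE conjE) simp_all
next
  assume "\<sigma> u \<noteq> \<sigma> v" thus "{u,v} \<in> omega S \<sigma>" using assms(2) unfolding omega_def by blast
qed

lemma omega_sub: "omega S \<sigma> \<subseteq> dom_edges S"
  unfolding omega_def by auto

lemma tri_card:
  fixes p q r :: 'a and \<omega> :: "'a set set"
  assumes "p \<noteq> q" "p \<noteq> r" "q \<noteq> r" and two: "\<forall>e\<in>\<omega>. \<exists>u v. u \<noteq> v \<and> e = {u,v}"
  shows "even (card {e\<in>\<omega>. e \<subseteq> {p,q,r}}) \<longleftrightarrow> (({p,q}\<in>\<omega>) = (({p,r}\<in>\<omega>) \<noteq> ({q,r}\<in>\<omega>)))"
proof -
  have eq: "{e\<in>\<omega>. e \<subseteq> {p,q,r}} = \<omega> \<inter> {{p,q},{p,r},{q,r}}"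
  proof (intro equalityI subsetI)
    fix e assume "e \<in> {e\<in>\<omega>. e \<subseteq> {p,q,r}}"
    hence e1: "e \<in> \<omega>" and e2: "e \<subseteq> {p,q,r}" by simp_all
    obtain u v where uv0: "u \<noteq> v" "e = {u,v}" using two[rule_format, OF e1] by blast
    have "u \<in> {p,q,r}" "v \<in> {p,q,r}" using e2 uv0(2) by simp_all
    hence uv: "u = p \<or> u = q \<or> u = r" "v = p \<or> v = q \<or> v = r" "u \<noteq> v" "e = {u,v}" "e \<in> \<omega>"
      using uv0 e1 by simp_all
    have "e = {p,q} \<or> e = {p,r} \<or> e = {q,r}"
      using uv(1,2,3) by (elim disjE) (simp_all add: uv(4) insert_commute)
    thus "e \<in> \<omega> \<inter> {{p,q},{p,r},{q,r}}" using uv(5) by blast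
  qed auto
  have d: "{p,q} \<noteq> {p,r}" "{p,q} \<noteq> {q,r}" "{p,r} \<noteq> {q,r}" using assms(1-3) by (auto simp: doubleton_eq_iff)
  show ?thesis unfolding eq
    by (cases "{p,q}\<in>\<omega>"; cases "{p,r}\<in>\<omega>"; cases "{q,r}\<in>\<omega>") (simp_all add: d)
qed



definition good :: "hedge set \<Rightarrow> bool" where
  "good \<omega> \<longleftrightarrow> finite \<omega> \<and> (\<forall>e\<in>\<omega>. \<exists>u v. adj u v \<and> e = {u,v}) \<and>
     (\<forall>t. is_hvertex t \<longrightarrow> even (card {e\<in>\<omega>. e \<subseteq> t}))"

definition hset :: "hedge set \<Rightarrow> int \<Rightarrow> int \<Rightarrow> int set" where
  "hset \<omega> a b = {x. a \<le> x \<and> {(x,b),(x+1,b)} \<in> \<omega>}"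

definition ray :: "hedge set \<Rightarrow> face \<Rightarrow> bool" where
  "ray \<omega> f = odd (card (hset \<omega> (fst f) (snd f)))"

lemma finite_hset: "finite \<omega> \<Longrightarrow> finite (hset \<omega> a b)"
proof -
  assume f: "finite \<omega>"
  have "inj (\<lambda>x::int. {(x,b),(x+1,b)})" by (auto simp: inj_def doubleton_eq_iff)
  hence "finite ((\<lambda>x::int. {(x,b),(x+1,b)}) -` \<omega>)" using f finite_vimageI by blast
  moreover have "hset \<omega> a b \<subseteq> (\<lambda>x::int. {(x,b),(x+1,b)}) -` \<omega>" unfolding hset_def by auto
  ultimately show ?thesis using finite_subset by blast
qed

lemma hset_step: "hset \<omega> a b = (if {(a,b),(a+1,b)} \<in> \<omega> then insert a (hset \<omega> (a+1) b) else hset \<omega> (a+1) b)"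
proof (intro set_eqI)
  fix x show "x \<in> hset \<omega> a b \<longleftrightarrow> x \<in> (if {(a,b),(a+1,b)} \<in> \<omega> then insert a (hset \<omega> (a+1) b) else hset \<omega> (a+1) b)"
    by (cases "x = a") (auto simp: hset_def)
qed

lemma ray_H: assumes "finite \<omega>" shows "(ray \<omega> (a,b) \<noteq> ray \<omega> (a+1,b)) \<longleftrightarrow> {(a,b),(a+1,b)} \<in> \<omega>"
proof -
  have "a \<notin> hset \<omega> (a+1) b" unfolding hset_def by auto
  thus ?thesis unfolding ray_def using finite_hset[OF assms, of "a+1" b]
    by (auto simp: hset_step[of \<omega> a b])
qed

lemma good_fin: "good \<omega> \<Longrightarrow> finite \<omega>"
  unfolding good_def by (rule conjunct1)

lemma good_two: assumes "good \<omega>" "e \<in> \<omega>" shows "\<exists>u v. adj u v \<and> e = {u,v}"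
proof -
  have "\<forall>e\<in>\<omega>. \<exists>u v. adj u v \<and> e = {u,v}" using assms(1) unfolding good_def by (rule conjunct1[OF conjunct2])
  thus ?thesis using assms(2) by (rule bspec)
qed

lemma good_par: assumes "good \<omega>" "is_hvertex t" shows "even (card {e\<in>\<omega>. e \<subseteq> t})"
proof -
  have "\<forall>t. is_hvertex t \<longrightarrow> even (card {e\<in>\<omega>. e \<subseteq> t})" using assms(1) unfolding good_def by (rule conjunct2[OF conjunct2])
  thus ?thesis using assms(2) by blast
qed

lemma good_tri:
  assumes g: "good \<omega>" and "is_hvertex {p,q,r}" "p \<noteq> q" "p \<noteq> r" "q \<noteq> r"
  shows "({p,q}\<in>\<omega>) = (({p,r}\<in>\<omega>) \<noteq> ({q,r}\<in>\<omega>))"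
proof -
  have "\<forall>e\<in>\<omega>. \<exists>u v. u \<noteq> v \<and> e = {u,v}"
  proof
    fix e assume "e \<in> \<omega>"
    then obtain u v where "adj u v" "e = {u,v}" using good_two[OF g] by blast
    thus "\<exists>u v. u \<noteq> v \<and> e = {u,v}" using adj_neq by blast
  qed
  moreover have "even (card {e\<in>\<omega>. e \<subseteq> {p,q,r}})" using good_par[OF g assms(2)] .
  ultimately show ?thesis using tri_card[of p q r \<omega>] assms(3-5) by blast
qed

lemma hv3: assumes "adj p q" "adj p r" "adj q r" shows "is_hvertex {p,q,r}"
proof -
  have n: "p \<noteq> q" "p \<noteq> r" "q \<noteq> r" using assms adj_neq by auto
  have s: "adj q p" "adj r p" "adj r q" using assms adj_sym by blast+
  show ?thesis unfolding is_hvertex_def using n assms s by simp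
qed

lemma triA: assumes "good \<omega>"
  shows "({(a,b),(a+1,b)}\<in>\<omega>) = (({(a,b),(a,b+1)}\<in>\<omega>) \<noteq> ({(a+1,b),(a,b+1)}\<in>\<omega>))"
  by (rule good_tri[OF assms hv3]) (auto simp: adj_def)

lemma triB: assumes "good \<omega>"
  shows "({(a+1,b),(a,b+1)}\<in>\<omega>) = (({(a+1,b),(a+1,b+1)}\<in>\<omega>) \<noteq> ({(a,b+1),(a+1,b+1)}\<in>\<omega>))"
  by (rule good_tri[OF assms hv3]) (auto simp: adj_def)

lemma bound: fixes \<omega> :: "hedge set" assumes "finite \<omega>" "\<forall>e\<in>\<omega>. finite e" shows "\<exists>N. \<forall>e\<in>\<omega>. \<forall>f\<in>e. fst f < N"
proof -
  have fin: "finite (fst ` \<Union>\<omega>)" using assms by auto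
  define N where "N = Max (insert 0 (fst ` \<Union>\<omega>)) + 1"
  have "\<forall>e\<in>\<omega>. \<forall>f\<in>e. fst f < N"
  proof (intro ballI)
    fix e f assume "e \<in> \<omega>" "f \<in> e"
    hence "fst f \<le> Max (insert 0 (fst ` \<Union>\<omega>))" using fin by (intro Max_ge) auto
    thus "fst f < N" unfolding N_def by simp
  qed
  thus ?thesis by blast
qed

lemma ray_V: assumes g: "good \<omega>"
  shows "(ray \<omega> (a,b) \<noteq> ray \<omega> (a,b+1)) \<longleftrightarrow> {(a,b),(a,b+1)} \<in> \<omega>"
proof -
  have fin: "finite \<omega>" using good_fin[OF g] .
  have "\<forall>e\<in>\<omega>. finite e"
  proof
    fix e assume "e \<in> \<omega>" then obtain u v where "e = {u,v}" using good_two[OF g] by blast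
    thus "finite e" by simp
  qed
  then obtain N where N: "\<forall>e\<in>\<omega>. \<forall>f\<in>e. fst f < N" using bound fin by blast
  have big: "(ray \<omega> (a,b) \<noteq> ray \<omega> (a,b+1)) \<longleftrightarrow> {(a,b),(a,b+1)} \<in> \<omega>" if "N \<le> a" for a
  proof -
    have "hset \<omega> a c = {}" for c unfolding hset_def using N that by fastforce
    moreover have "{(a,b),(a,b+1)} \<notin> \<omega>" using N that by fastforce
    ultimately show ?thesis unfolding ray_def by simp
  qed
  show ?thesis
  proof (cases "N \<le> a")
    case True thus ?thesis using big by blast
  next
    case False
    hence "a \<le> N" by simp
    thus ?thesis
    proof (induction a rule: int_le_induct)
      case base thus ?case using big by simp
    next
      case (step i)
      have h1: "(ray \<omega> (i-1,b) \<noteq> ray \<omega> (i,b)) \<longleftrightarrow> {(i-1,b),(i,b)} \<in> \<omega>"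
        using ray_H[OF fin, of "i-1" b] by simp
      have h2: "(ray \<omega> (i-1,b+1) \<noteq> ray \<omega> (i,b+1)) \<longleftrightarrow> {(i-1,b+1),(i,b+1)} \<in> \<omega>"
        using ray_H[OF fin, of "i-1" "b+1"] by simp
      have tA: "({(i-1,b),(i,b)}\<in>\<omega>) = (({(i-1,b),(i-1,b+1)}\<in>\<omega>) \<noteq> ({(i,b),(i-1,b+1)}\<in>\<omega>))"
        using triA[OF g, of "i-1" b] by simp
      have tB: "({(i,b),(i-1,b+1)}\<in>\<omega>) = (({(i,b),(i,b+1)}\<in>\<omega>) \<noteq> ({(i-1,b+1),(i,b+1)}\<in>\<omega>))"
        using triB[OF g, of "i-1" b] by simp
      show ?case using step.IH h1 h2 tA tB by argo
    qed
  qed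
qed

lemma ray_D: assumes g: "good \<omega>"
  shows "(ray \<omega> (a+1,b) \<noteq> ray \<omega> (a,b+1)) \<longleftrightarrow> {(a+1,b),(a,b+1)} \<in> \<omega>"
proof -
  have fin: "finite \<omega>" using good_fin[OF g] .
  show ?thesis using ray_H[OF fin, of a b] ray_V[OF g, of a b] triA[OF g, of a b] by argo
qed

lemma ray_adj: assumes g: "good \<omega>" and "adj u v"
  shows "(ray \<omega> u \<noteq> ray \<omega> v) \<longleftrightarrow> {u,v} \<in> \<omega>"
proof -
  have fin: "finite \<omega>" using good_fin[OF g] .
  obtain a b where u: "u = (a,b)" by (cases u)
  obtain c d where v: "v = (c,d)" by (cases v)
  have "(c-a,d-b) \<in> {(1,0), (-1,0), (0,1), (0,-1), (1,-1), (-1,1)}"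
    using assms(2) unfolding adj_def u v by simp
  hence "(c - a = 1 \<and> d - b = 0) \<or> (c - a = -1 \<and> d - b = 0) \<or> (c - a = 0 \<and> d - b = 1) \<or> (c - a = 0 \<and> d - b = -1)
     \<or> (c - a = 1 \<and> d - b = -1) \<or> (c - a = -1 \<and> d - b = 1)" by simp
  thus ?thesis
  proof (elim disjE conjE)
    assume "c - a = 1" "d - b = 0" hence "v = (a+1,b)" using v by simp
    thus ?thesis using ray_H[OF fin, of a b] u by simp
  next
    assume "c - a = -1" "d - b = 0" hence v': "v = (a-1,b)" using v by simp
    have "(ray \<omega> (a-1,b) \<noteq> ray \<omega> (a,b)) \<longleftrightarrow> {(a-1,b),(a,b)} \<in> \<omega>"
      using ray_H[OF fin, of "a-1" b] by simp
    moreover have s1: "(ray \<omega> u \<noteq> ray \<omega> v) = (ray \<omega> v \<noteq> ray \<omega> u)" by blast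
    moreover have s2: "{u,v} = {v,u}" by (rule insert_commute)
    ultimately show ?thesis by (subst s1, subst s2) (simp only: u v')
  next
    assume "c - a = 0" "d - b = 1" hence "v = (a,b+1)" using v by simp
    thus ?thesis using ray_V[OF g, of a b] u by simp
  next
    assume "c - a = 0" "d - b = -1" hence v': "v = (a,b-1)" using v by simp
    have "(ray \<omega> (a,b-1) \<noteq> ray \<omega> (a,b)) \<longleftrightarrow> {(a,b-1),(a,b)} \<in> \<omega>"
      using ray_V[OF g, of a "b-1"] by simp
    moreover have s1: "(ray \<omega> u \<noteq> ray \<omega> v) = (ray \<omega> v \<noteq> ray \<omega> u)" by blast
    moreover have s2: "{u,v} = {v,u}" by (rule insert_commute)
    ultimately show ?thesis by (subst s1, subst s2) (simp only: u v')
  next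
    assume "c - a = 1" "d - b = -1" hence v': "v = (a+1,b-1)" using v by simp
    have "(ray \<omega> (a+1,b-1) \<noteq> ray \<omega> (a,b)) \<longleftrightarrow> {(a+1,b-1),(a,b)} \<in> \<omega>"
      using ray_D[OF g, of a "b-1"] by simp
    moreover have s1: "(ray \<omega> u \<noteq> ray \<omega> v) = (ray \<omega> v \<noteq> ray \<omega> u)" by blast
    moreover have s2: "{u,v} = {v,u}" by (rule insert_commute)
    ultimately show ?thesis by (subst s1, subst s2) (simp only: u v')
  next
    assume "c - a = -1" "d - b = 1" hence v': "v = (a-1,b+1)" using v by simp
    have "(ray \<omega> (a,b) \<noteq> ray \<omega> (a-1,b+1)) \<longleftrightarrow> {(a,b),(a-1,b+1)} \<in> \<omega>"
      using ray_D[OF g, of "a-1" b] by simp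
    thus ?thesis using u v' by simp
  qed
qed



lemma spins_restrict: "restrict f (dom_faces S) \<in> spins S"
  unfolding spins_def by (simp add: restrict_PiE_iff)

lemma spins_restrict_eq: "\<sigma> \<in> spins S \<Longrightarrow> restrict \<sigma> (dom_faces S) = \<sigma>"
  unfolding spins_def by (rule PiE_restrict)

lemma dom_edges_iff: assumes "adj x y" shows "{x,y} \<in> dom_edges S \<longleftrightarrow> x \<in> S \<and> y \<in> S"
proof
  assume "{x,y} \<in> dom_edges S"
  then obtain u v where "u \<in> S" "v \<in> S" "{x,y} = {u,v}" unfolding dom_edges_def by blast
  thus "x \<in> S \<and> y \<in> S" by (metis doubleton_eq_iff)
next
  assume "x \<in> S \<and> y \<in> S" thus "{x,y} \<in> dom_edges S" using assms unfolding dom_edges_def by blast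
qed

lemma omega_mem': assumes "adj x y" shows "{x,y} \<in> omega S \<sigma> \<longleftrightarrow> x \<in> S \<and> y \<in> S \<and> \<sigma> x \<noteq> \<sigma> y"
proof (cases "x \<in> S \<and> y \<in> S")
  case True
  hence "{x,y} \<in> dom_edges S" using dom_edges_iff[OF assms] by blast
  thus ?thesis using omega_mem[OF assms] True by blast
next
  case False
  hence "{x,y} \<notin> dom_edges S" using dom_edges_iff[OF assms] by blast
  thus ?thesis using omega_sub False by blast
qed

lemma in_ib: assumes "adj x z" "x \<in> dom_faces S" "z \<notin> S" shows "x \<in> inner_boundary S"
proof -
  have "x \<in> S" using assms(2) dom_faces_sub by blast
  hence "{x,z} \<in> boundary_edges S" using assms unfolding boundary_edges_def by blast
  thus ?thesis using assms(2) unfolding inner_boundary_def by blast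
qed

lemma hvertex_split:
  assumes "is_hvertex t"
  obtains p q r where "t = {p,q,r}" "p \<noteq> q" "q \<noteq> r" "p \<noteq> r"
    "adj p q" "adj p r" "adj q r" "adj q p" "adj r p" "adj r q"
proof -
  have c: "card t = 3" and a: "\<forall>u\<in>t. \<forall>v\<in>t. u \<noteq> v \<longrightarrow> adj u v" using assms unfolding is_hvertex_def by blast+
  obtain p q r where t: "t = {p,q,r}" "p \<noteq> q" "q \<noteq> r" "p \<noteq> r" using c card_3_iff by metis
  have a': "\<And>u v. u \<in> t \<Longrightarrow> v \<in> t \<Longrightarrow> u \<noteq> v \<Longrightarrow> adj u v" using a by blast
  have m: "p \<in> t" "q \<in> t" "r \<in> t" using t(1) by simp_all
  have "adj p q" "adj p r" "adj q r" "adj q p" "adj r p" "adj r q"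
    using a'[OF m(1) m(2) t(2)] a'[OF m(1) m(3) t(4)] a'[OF m(2) m(3) t(3)]
      a'[OF m(2) m(1) t(2)[symmetric]] a'[OF m(3) m(1) t(4)[symmetric]] a'[OF m(3) m(2) t(3)[symmetric]] by this+
  thus ?thesis using t that by blast
qed

lemma omega_two: "\<forall>e\<in>omega S \<sigma>. \<exists>u v. u \<noteq> v \<and> e = {u,v}"
proof
  fix e assume "e \<in> omega S \<sigma>"
  hence "e \<in> dom_edges S" using omega_sub by blast
  then obtain u v where "adj u v" "e = {u,v}" unfolding dom_edges_def by blast
  thus "\<exists>u v. u \<noteq> v \<and> e = {u,v}" using adj_neq by blast
qed

lemma omega_loop:
  assumes c: "\<forall>w\<in>inner_boundary S. \<forall>w'\<in>inner_boundary S. \<sigma> w = \<sigma> w'"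
  shows "loop_config S (omega S \<sigma>)"
  unfolding loop_config_def
proof (intro conjI allI impI)
  show "omega S \<sigma> \<subseteq> dom_edges S" by (rule omega_sub)
  fix t assume ht: "is_hvertex t"
  then obtain p q r where t: "t = {p,q,r}" "p \<noteq> q" "q \<noteq> r" "p \<noteq> r"
    and a: "adj p q" "adj p r" "adj q r" "adj q p" "adj r p" "adj r q" by (rule hvertex_split)
  have df: "x \<in> dom_faces S" if "adj x y" "x \<in> S" "y \<in> S" for x y
  proof -
    have "{x,y} \<in> dom_edges S" using that dom_edges_iff by blast
    thus ?thesis using dom_edge_faces by blast
  qed
  have h1: "\<sigma> p = \<sigma> q" if "p \<in> S" "q \<in> S" "r \<notin> S"
  proof -
    have "p \<in> inner_boundary S" using in_ib[OF a(2) df[OF a(1)]] that by blast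
    moreover have "q \<in> inner_boundary S" using in_ib[OF a(3) df[OF a(4)]] that by blast
    ultimately show ?thesis using c by blast
  qed
  have h2: "\<sigma> p = \<sigma> r" if "p \<in> S" "r \<in> S" "q \<notin> S"
  proof -
    have "p \<in> inner_boundary S" using in_ib[OF a(1) df[OF a(2)]] that by blast
    moreover have "r \<in> inner_boundary S" using in_ib[OF a(6) df[OF a(5)]] that by blast
    ultimately show ?thesis using c by blast
  qed
  have h3: "\<sigma> q = \<sigma> r" if "q \<in> S" "r \<in> S" "p \<notin> S"
  proof -
    have "q \<in> inner_boundary S" using in_ib[OF a(4) df[OF a(3)]] that by blast
    moreover have "r \<in> inner_boundary S" using in_ib[OF a(5) df[OF a(6)]] that by blast
    ultimately show ?thesis using c by blast
  qed
  have m: "({p,q} \<in> omega S \<sigma>) = (p \<in> S \<and> q \<in> S \<and> \<sigma> p \<noteq> \<sigma> q)"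
     "({p,r} \<in> omega S \<sigma>) = (p \<in> S \<and> r \<in> S \<and> \<sigma> p \<noteq> \<sigma> r)"
     "({q,r} \<in> omega S \<sigma>) = (q \<in> S \<and> r \<in> S \<and> \<sigma> q \<noteq> \<sigma> r)"
    by (rule omega_mem'[OF a(1)], rule omega_mem'[OF a(2)], rule omega_mem'[OF a(3)])
  have "({p,q} \<in> omega S \<sigma>) = (({p,r} \<in> omega S \<sigma>) \<noteq> ({q,r} \<in> omega S \<sigma>))"
    unfolding m using h1 h2 h3 by (cases "p \<in> S"; cases "q \<in> S"; cases "r \<in> S"; cases "\<sigma> p"; cases "\<sigma> q"; cases "\<sigma> r"; simp)
  thus "even (card {e \<in> omega S \<sigma>. e \<subseteq> t})"
    using tri_card[OF t(2) t(4) t(3) omega_two] t(1) by simp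
qed

lemma two_of_three:
  assumes "finite C" "card C = 3" "A \<subseteq> C" "B \<subseteq> C" "card A = 2" "card B = 2"
  shows "A \<inter> B \<noteq> {}"
proof
  assume d: "A \<inter> B = {}"
  have fA: "finite A" "finite B" using assms finite_subset by blast+
  have "card (A \<union> B) = 4" using card_Un_disjoint[OF fA d] assms by simp
  moreover have "card (A \<union> B) \<le> 3" using card_mono[OF assms(1)] assms by (metis Un_least)
  ultimately show False by simp
qed

lemma hedge_card: assumes "is_hedge e" shows "card e = 2"
proof -
  obtain u v where "adj u v" "e = {u,v}" using assms unfolding is_hedge_def by blast
  thus ?thesis using adj_neq by simp
qed

lemma ib_const:
  assumes dom: "is_domain S"
    and edge: "\<And>x y. adj x y \<Longrightarrow> \<not> (x \<in> S \<and> y \<in> S) \<Longrightarrow> \<tau> x = \<tau> y"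
    and w: "w \<in> inner_boundary S" "w' \<in> inner_boundary S"
  shows "\<tau> w = \<tau> w'"
proof -
  obtain ps where sp: "self_avoiding_polygon ps" and be: "boundary_edges S = polygon_edges ps"
    using dom unfolding is_domain_def by blast
  define n where "n = length ps"
  define E where "E i = ps ! i \<inter> ps ! ((i + 1) mod n)" for i
  have n3: "n \<ge> 3" using sp unfolding self_avoiding_polygon_def n_def by blast
  have hv: "is_hvertex (ps ! i)" and he: "is_hedge (E i)" if "i < n" for i
    using sp that unfolding self_avoiding_polygon_def E_def n_def by blast+
  have Eb: "E i \<in> boundary_edges S" if "i < n" for i
    unfolding be polygon_edges_def E_def n_def using that n_def by blast
  have bconst: "\<tau> x = \<tau> y" if b1: "e \<in> boundary_edges S" and b2: "x \<in> e" "y \<in> e" for e x y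
  proof -
    obtain u v where uv: "adj u v" "u \<in> S" "v \<notin> S" "e = {u,v}"
      using b1 unfolding boundary_edges_def by blast
    have "\<tau> u = \<tau> v" using edge[OF uv(1)] uv(3) by blast
    thus ?thesis using b2 uv(4) by (metis insertE singletonD)
  qed
  have claim: "\<forall>x\<in>E i. \<forall>y\<in>E 0. \<tau> x = \<tau> y" if "i < n" for i
    using that
  proof (induction i)
    case 0 thus ?case using bconst Eb by blast
  next
    case (Suc i)
    have "i < n" using Suc.prems by simp
    have m: "(Suc i) mod n = Suc i" using Suc.prems by simp
    have s1: "E i \<subseteq> ps ! Suc i" unfolding E_def using m by simp
    have s2: "E (Suc i) \<subseteq> ps ! Suc i" unfolding E_def by blast
    have "card (ps ! Suc i) = 3" using hv[OF Suc.prems] unfolding is_hvertex_def by blast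
    hence "E i \<inter> E (Suc i) \<noteq> {}"
      using two_of_three[OF _ _ s1 s2 hedge_card[OF he[OF \<open>i < n\<close>]] hedge_card[OF he[OF Suc.prems]]]
      by (metis card.infinite zero_neq_numeral)
    then obtain z where z: "z \<in> E i" "z \<in> E (Suc i)" by blast
    show ?case
    proof (intro ballI)
      fix x y assume "x \<in> E (Suc i)" "y \<in> E 0"
      have "\<tau> x = \<tau> z" using bconst[OF Eb[OF Suc.prems]] \<open>x \<in> E (Suc i)\<close> z(2) by blast
      also have "\<dots> = \<tau> y" using Suc.IH[OF \<open>i < n\<close>] z(1) \<open>y \<in> E 0\<close> by blast
      finally show "\<tau> x = \<tau> y" .
    qed
  qed
  have inE: "\<exists>i<n. x \<in> E i" if xi: "x \<in> inner_boundary S" for x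
  proof -
    obtain e where "e \<in> boundary_edges S" "x \<in> e" using xi unfolding inner_boundary_def by blast
    then obtain i where "i < n" "e = E i" unfolding be polygon_edges_def E_def n_def by blast
    thus ?thesis using \<open>x \<in> e\<close> by blast
  qed
  have "card (E 0) = 2" using hedge_card[OF he] n3 by simp
  then obtain y0 where y0: "y0 \<in> E 0" by (metis all_not_in_conv card.empty zero_neq_numeral)
  obtain i where "i < n" "w \<in> E i" using inE[OF w(1)] by blast
  hence "\<tau> w = \<tau> y0" using claim y0 by blast
  moreover obtain j where "j < n" "w' \<in> E j" using inE[OF w(2)] by blast
  hence "\<tau> w' = \<tau> y0" using claim y0 by blast
  ultimately show ?thesis by simp
qed

lemma loop_good: assumes "finite S" "loop_config S \<omega>" shows "good \<omega>"
proof -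
  have sub: "\<omega> \<subseteq> dom_edges S" using assms(2) unfolding loop_config_def by blast
  have "finite \<omega>" using finite_dom_edges[OF assms(1)] sub finite_subset by blast
  moreover have "\<forall>e\<in>\<omega>. \<exists>u v. adj u v \<and> e = {u,v}" using sub unfolding dom_edges_def by blast
  moreover have "\<forall>t. is_hvertex t \<longrightarrow> even (card {e\<in>\<omega>. e \<subseteq> t})" using assms(2) unfolding loop_config_def by blast
  ultimately show ?thesis unfolding good_def by blast
qed

lemma exist_spin:
  assumes dom: "is_domain S" and lc: "loop_config S \<omega>"
  shows "\<exists>\<sigma>\<in>spins S. omega S \<sigma> = \<omega> \<and> (\<forall>w\<in>inner_boundary S. \<sigma> w)"
proof -
  have fS: "finite S" using dom unfolding is_domain_def by blast
  have g: "good \<omega>" using loop_good[OF fS lc] .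
  have sub: "\<omega> \<subseteq> dom_edges S" using lc unfolding loop_config_def by blast
  have edge: "ray \<omega> x = ray \<omega> y" if "adj x y" "\<not> (x \<in> S \<and> y \<in> S)" for x y
  proof -
    have "{x,y} \<notin> \<omega>" using sub dom_edges_iff[OF that(1)] that(2) by blast
    thus ?thesis using ray_adj[OF g that(1)] by blast
  qed
  define w0 where "w0 = (SOME w. w \<in> inner_boundary S)"
  define \<sigma> where "\<sigma> = restrict (\<lambda>f. ray \<omega> f = ray \<omega> w0) (dom_faces S)"
  have "\<sigma> \<in> spins S" unfolding \<sigma>_def by (rule spins_restrict)
  moreover have "omega S \<sigma> = \<omega>"
  proof (rule set_eqI)
    fix e
    show "e \<in> omega S \<sigma> \<longleftrightarrow> e \<in> \<omega>"
    proof (cases "e \<in> dom_edges S")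
      case False thus ?thesis using sub omega_sub by blast
    next
      case True
      then obtain u v where uv: "adj u v" "u \<in> S" "v \<in> S" "e = {u,v}" unfolding dom_edges_def by blast
      have de: "{u,v} \<in> dom_edges S" using True uv(4) by simp
      have "u \<in> dom_faces S" "v \<in> dom_faces S" using dom_edge_faces[OF de] by blast+
      hence "(\<sigma> u \<noteq> \<sigma> v) = (ray \<omega> u \<noteq> ray \<omega> v)" unfolding \<sigma>_def
        by (cases "ray \<omega> u"; cases "ray \<omega> v"; cases "ray \<omega> w0"; simp)
      thus ?thesis using omega_mem[OF uv(1) de] ray_adj[OF g uv(1)] uv(4) by simp
    qed
  qed
  moreover have "\<forall>w\<in>inner_boundary S. \<sigma> w"
  proof
    fix w assume w: "w \<in> inner_boundary S"
    hence "w0 \<in> inner_boundary S" unfolding w0_def by (rule someI)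
    hence "ray \<omega> w = ray \<omega> w0" using ib_const[of S "ray \<omega>" w w0, OF dom edge w] by blast
    moreover have "w \<in> dom_faces S" using w unfolding inner_boundary_def by blast
    ultimately show "\<sigma> w" unfolding \<sigma>_def by simp
  qed
  ultimately show ?thesis by blast
qed



lemma coherent_iff: "coherent S sr sb \<longleftrightarrow> omega S sr \<inter> omega S sb = {}"
proof
  assume coh: "coherent S sr sb"
  show "omega S sr \<inter> omega S sb = {}"
  proof (rule ccontr)
    assume "omega S sr \<inter> omega S sb \<noteq> {}"
    then obtain e where e: "e \<in> omega S sr" "e \<in> omega S sb" by blast
    hence "e \<in> dom_edges S" using omega_sub by blast
    then obtain u v where uv: "adj u v" "u \<in> S" "v \<in> S" "e = {u,v}" unfolding dom_edges_def by blast
    have de: "{u,v} \<in> dom_edges S" using \<open>e \<in> dom_edges S\<close> uv(4) by simp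
    have "u \<in> dom_faces S" "v \<in> dom_faces S" using dom_edge_faces[OF de] by blast+
    moreover have "sr u \<noteq> sr v" "sb u \<noteq> sb v" using omega_mem[OF uv(1) de] e uv(4) by blast+
    ultimately show False using coh uv(1) unfolding coherent_def by blast
  qed
next
  assume d: "omega S sr \<inter> omega S sb = {}"
  show "coherent S sr sb" unfolding coherent_def
  proof (intro ballI impI)
    fix u v assume uv: "u \<in> dom_faces S" "v \<in> dom_faces S" "adj u v"
    have de: "{u,v} \<in> dom_edges S" using adj_dom_edge[OF uv] .
    show "sr u = sr v \<or> sb u = sb v" using omega_mem[OF uv(3) de, of sr] omega_mem[OF uv(3) de, of sb] d by blast
  qed
qed

lemma omega_xor:
  "omega S (restrict (\<lambda>f. \<sigma> f = \<sigma>0 f) (dom_faces S)) = (omega S \<sigma> - omega S \<sigma>0) \<union> (omega S \<sigma>0 - omega S \<sigma>)"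
proof (rule set_eqI)
  fix e
  show "e \<in> omega S (restrict (\<lambda>f. \<sigma> f = \<sigma>0 f) (dom_faces S)) \<longleftrightarrow> e \<in> (omega S \<sigma> - omega S \<sigma>0) \<union> (omega S \<sigma>0 - omega S \<sigma>)"
  proof (cases "e \<in> dom_edges S")
    case False thus ?thesis using omega_sub by blast
  next
    case True
    then obtain u v where uv: "adj u v" "u \<in> S" "v \<in> S" "e = {u,v}" unfolding dom_edges_def by blast
    have de: "{u,v} \<in> dom_edges S" using True uv(4) by simp
    have d: "u \<in> dom_faces S" "v \<in> dom_faces S" using dom_edge_faces[OF de] by blast+
    have r: "restrict (\<lambda>f. \<sigma> f = \<sigma>0 f) (dom_faces S) u = (\<sigma> u = \<sigma>0 u)"
            "restrict (\<lambda>f. \<sigma> f = \<sigma>0 f) (dom_faces S) v = (\<sigma> v = \<sigma>0 v)" using d by simp_all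
    show ?thesis unfolding uv(4) omega_mem[OF uv(1) de] r Un_iff Diff_iff
      by (cases "\<sigma> u"; cases "\<sigma> v"; cases "\<sigma>0 u"; cases "\<sigma>0 v"; simp)
  qed
qed

lemma finite_spins: "finite S \<Longrightarrow> finite (spins S)"
  unfolding spins_def by (intro finite_PiE finite_dom_faces) auto

lemma finite_A: "finite S \<Longrightarrow> finite (plus_const_configs S)"
proof -
  assume "finite S"
  hence "finite (spins S \<times> spins S)" using finite_spins by blast
  moreover have "plus_const_configs S \<subseteq> spins S \<times> spins S" unfolding plus_const_configs_def by blast
  ultimately show ?thesis using finite_subset by blast
qed

definition fib :: "face set \<Rightarrow> hedge set \<Rightarrow> hedge set \<Rightarrow> ((face \<Rightarrow> bool) \<times> (face \<Rightarrow> bool)) set" where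
  "fib S wr wb = {x \<in> plus_const_configs S. (\<lambda>(sr, sb). (omega S sr, omega S sb)) x = (wr, wb)}"

lemma fib_iff: "(sr, sb) \<in> fib S wr wb \<longleftrightarrow> sr \<in> spins S \<and> sb \<in> spins S \<and> wr \<inter> wb = {} \<and>
   (\<forall>w\<in>inner_boundary S. sr w) \<and> (\<forall>w\<in>inner_boundary S. \<forall>w'\<in>inner_boundary S. sb w = sb w') \<and>
   omega S sr = wr \<and> omega S sb = wb"
  unfolding fib_def plus_const_configs_def coherent_iff by auto

definition gmap :: "face set \<Rightarrow> (face \<Rightarrow> bool) \<Rightarrow> (face \<Rightarrow> bool) \<Rightarrow> (face \<Rightarrow> bool) \<times> (face \<Rightarrow> bool) \<Rightarrow> (face \<Rightarrow> bool) \<times> (face \<Rightarrow> bool)" where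
  "gmap S a b x = (restrict (\<lambda>f. fst x f = a f) (dom_faces S), restrict (\<lambda>f. snd x f = b f) (dom_faces S))"

lemma restrict_invol: assumes "s \<in> spins S"
  shows "restrict (\<lambda>f. restrict (\<lambda>f. s f = a f) (dom_faces S) f = a f) (dom_faces S) = s"
proof -
  have "restrict (\<lambda>f. restrict (\<lambda>f. s f = a f) (dom_faces S) f = a f) (dom_faces S) = restrict s (dom_faces S)"
    by (rule restrict_ext) (simp; blast)
  thus ?thesis using spins_restrict_eq[OF assms] by simp
qed

lemma gmap_invol: assumes "fst x \<in> spins S" "snd x \<in> spins S" shows "gmap S a b (gmap S a b x) = x"
  unfolding gmap_def using restrict_invol[OF assms(1)] restrict_invol[OF assms(2)] by (cases x) simp

lemma gmap_maps:
  assumes "(sr, sb) \<in> fib S wr wb" and a: "a \<in> spins S" "omega S a = ar" "\<forall>w\<in>inner_boundary S. a w"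
    and b: "b \<in> spins S" "omega S b = br" "\<forall>w\<in>inner_boundary S. b w"
    and d: "wr' \<inter> wb' = {}"
    and er: "wr' = (wr - ar) \<union> (ar - wr)" and eb: "wb' = (wb - br) \<union> (br - wb)"
  shows "gmap S a b (sr, sb) \<in> fib S wr' wb'"
proof -
  have h: "sr \<in> spins S" "sb \<in> spins S" "\<forall>w\<in>inner_boundary S. sr w"
    "\<forall>w\<in>inner_boundary S. \<forall>w'\<in>inner_boundary S. sb w = sb w'" "omega S sr = wr" "omega S sb = wb"
    using assms(1) unfolding fib_iff by blast+
  have ibd: "inner_boundary S \<subseteq> dom_faces S" unfolding inner_boundary_def by blast
  have "\<forall>w\<in>inner_boundary S. restrict (\<lambda>f. sr f = a f) (dom_faces S) w"
  proof
    fix w assume w: "w \<in> inner_boundary S"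
    hence "w \<in> dom_faces S" using ibd by blast
    moreover have "sr w" "a w" using h(3) a(3) w by blast+
    ultimately show "restrict (\<lambda>f. sr f = a f) (dom_faces S) w" by simp
  qed
  moreover have "\<forall>w\<in>inner_boundary S. \<forall>w'\<in>inner_boundary S. restrict (\<lambda>f. sb f = b f) (dom_faces S) w = restrict (\<lambda>f. sb f = b f) (dom_faces S) w'"
  proof (intro ballI)
    fix w w' assume w: "w \<in> inner_boundary S" "w' \<in> inner_boundary S"
    hence "w \<in> dom_faces S" "w' \<in> dom_faces S" using ibd by blast+
    moreover have "sb w = sb w'" "b w" "b w'" using h(4) b(3) w by blast+
    ultimately show "restrict (\<lambda>f. sb f = b f) (dom_faces S) w = restrict (\<lambda>f. sb f = b f) (dom_faces S) w'" by simp
  qed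
  moreover have "omega S (restrict (\<lambda>f. sr f = a f) (dom_faces S)) = wr'"
    unfolding omega_xor h(5) a(2) er ..
  moreover have "omega S (restrict (\<lambda>f. sb f = b f) (dom_faces S)) = wb'"
    unfolding omega_xor h(6) b(2) eb ..
  ultimately show ?thesis unfolding gmap_def fib_iff fst_conv snd_conv using spins_restrict d by blast
qed

lemma fib_card:
  assumes dom: "is_domain S" and B: "(wr, wb) \<in> disjoint_loop_pairs S"
  shows "card (fib S wr wb) = card (fib S {} {})"
proof -
  have fS: "finite S" using dom unfolding is_domain_def by blast
  have lr: "loop_config S wr" and lb: "loop_config S wb" and d: "wr \<inter> wb = {}"
    using B unfolding disjoint_loop_pairs_def by blast+
  obtain a where a: "a \<in> spins S" "omega S a = wr" "\<forall>w\<in>inner_boundary S. a w" using exist_spin[OF dom lr] by blast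
  obtain b where b: "b \<in> spins S" "omega S b = wb" "\<forall>w\<in>inner_boundary S. b w" using exist_spin[OF dom lb] by blast
  have fin: "finite (fib S x y)" for x y
    using finite_A[OF fS] unfolding fib_def by simp
  have sub: "fib S x y \<subseteq> spins S \<times> spins S" for x y
    unfolding fib_def plus_const_configs_def by blast
  have inj: "inj_on (gmap S a b) (fib S x y)" for x y
  proof (rule inj_onI)
    fix p q assume "p \<in> fib S x y" "q \<in> fib S x y" "gmap S a b p = gmap S a b q"
    hence pq: "p \<in> spins S \<times> spins S" "q \<in> spins S \<times> spins S" "gmap S a b p = gmap S a b q" using sub by blast+
    have "p = gmap S a b (gmap S a b p)" using gmap_invol[of p S] pq(1) by (simp add: mem_Times_iff)
    also have "\<dots> = gmap S a b (gmap S a b q)" using pq(3) by simp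
    also have "\<dots> = q" using gmap_invol[of q S] pq(2) by (simp add: mem_Times_iff)
    finally show "p = q" .
  qed
  have m1: "gmap S a b ` fib S wr wb \<subseteq> fib S {} {}"
  proof
    fix z assume "z \<in> gmap S a b ` fib S wr wb"
    then obtain sr sb where "(sr, sb) \<in> fib S wr wb" "z = gmap S a b (sr, sb)" by auto
    thus "z \<in> fib S {} {}" using gmap_maps[OF _ a b, of sr sb wr wb "{}" "{}"] by simp
  qed
  have m2: "gmap S a b ` fib S {} {} \<subseteq> fib S wr wb"
  proof
    fix z assume "z \<in> gmap S a b ` fib S {} {}"
    then obtain sr sb where "(sr, sb) \<in> fib S {} {}" "z = gmap S a b (sr, sb)" by auto
    thus "z \<in> fib S wr wb" using gmap_maps[OF _ a b, of sr sb "{}" "{}" wr wb] d by simp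
  qed
  show ?thesis using card_inj_on_le[OF inj m1 fin] card_inj_on_le[OF inj m2 fin] by simp
qed

lemma map_pmf_uniform:
  assumes fA: "finite A" and nA: "A \<noteq> {}" and img: "f ` A = B"
    and k: "\<And>b. b \<in> B \<Longrightarrow> card {x\<in>A. f x = b} = k"
  shows "map_pmf f (pmf_of_set A) = pmf_of_set B"
proof (rule pmf_eqI)
  fix b
  have fB: "finite B" using img fA by blast
  have nB: "B \<noteq> {}" using img nA by blast
  have cA: "card A = k * card B"
  proof -
    have "card A = (\<Sum>y\<in>B. \<Sum>x\<in>{x\<in>A. f x = y}. (1::nat))"
      using sum.group[OF fA fB, of f "\<lambda>_. 1::nat"] img by simp
    also have "\<dots> = (\<Sum>y\<in>B. k)" using k by simp
    finally show ?thesis by simp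
  qed
  have pos: "card A > 0" using fA nA by (simp add: card_gt_0_iff)
  have fib: "A \<inter> f -` {b} = {x\<in>A. f x = b}" by blast
  have "pmf (map_pmf f (pmf_of_set A)) b = real (card {x\<in>A. f x = b}) / real (card A)"
    unfolding pmf_map measure_pmf_of_set[OF nA fA] fib ..
  also have "\<dots> = pmf (pmf_of_set B) b"
  proof (cases "b \<in> B")
    case True
    have "k > 0" using pos cA by simp
    thus ?thesis using True k[OF True] cA nB fB by (simp add: indicator_def)
  next
    case False
    hence "{x\<in>A. f x = b} = {}" using img by blast
    hence "card {x\<in>A. f x = b} = 0" by (simp only: card.empty)
    thus ?thesis using False nB fB by (simp add: indicator_def)
  qed
  finally show "pmf (map_pmf f (pmf_of_set A)) b = pmf (pmf_of_set B) b" .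
qed

lemma omega_const: "omega S (restrict (\<lambda>_. c) (dom_faces S)) = {}"
proof (rule equals0I)
  fix e assume e: "e \<in> omega S (restrict (\<lambda>_. c) (dom_faces S))"
  hence "e \<in> dom_edges S" using omega_sub by blast
  then obtain u v where uv: "adj u v" "u \<in> S" "v \<in> S" "e = {u,v}" unfolding dom_edges_def by blast
  have de: "{u,v} \<in> dom_edges S" using \<open>e \<in> dom_edges S\<close> uv(4) by simp
  have d: "u \<in> dom_faces S" "v \<in> dom_faces S" using dom_edge_faces[OF de] by blast+
  have "restrict (\<lambda>_. c) (dom_faces S) u \<noteq> restrict (\<lambda>_. c) (dom_faces S) v"
    using omega_mem[OF uv(1) de] e uv(4) by blast
  thus False using d by simp
qed

lemma A_nonempty: "plus_const_configs S \<noteq> {}"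
proof -
  let ?s = "restrict (\<lambda>_. True) (dom_faces S)"
  have "omega S ?s = {}" by (rule omega_const)
  hence "(?s, ?s) \<in> plus_const_configs S"
    unfolding plus_const_configs_def inner_boundary_def coherent_iff using spins_restrict by auto
  thus ?thesis by blast
qed

lemma part1:
  assumes dom: "is_domain S"
  shows "map_pmf (\<lambda>(sr, sb). (omega S sr, omega S sb)) (mu_plus_const S) = pmf_of_set (disjoint_loop_pairs S)"
  unfolding mu_plus_const_def
proof (rule map_pmf_uniform)
  have fS: "finite S" using dom unfolding is_domain_def by blast
  show "finite (plus_const_configs S)" using finite_A[OF fS] .
  show "plus_const_configs S \<noteq> {}" by (rule A_nonempty)
  show "(\<lambda>(sr, sb). (omega S sr, omega S sb)) ` plus_const_configs S = disjoint_loop_pairs S"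
  proof (intro equalityI subsetI)
    fix z assume "z \<in> (\<lambda>(sr, sb). (omega S sr, omega S sb)) ` plus_const_configs S"
    then obtain sr sb where x: "(sr, sb) \<in> plus_const_configs S" "z = (omega S sr, omega S sb)" by auto
    have "(sr, sb) \<in> fib S (omega S sr) (omega S sb)" using x(1) unfolding fib_def by simp
    hence h: "omega S sr \<inter> omega S sb = {}" "\<forall>w\<in>inner_boundary S. sr w"
       "\<forall>w\<in>inner_boundary S. \<forall>w'\<in>inner_boundary S. sb w = sb w'" unfolding fib_iff by blast+
    have "loop_config S (omega S sr)" by (rule omega_loop) (use h(2) in blast)
    moreover have "loop_config S (omega S sb)" by (rule omega_loop) (use h(3) in blast)
    ultimately show "z \<in> disjoint_loop_pairs S" unfolding disjoint_loop_pairs_def x(2) using h(1) by simp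
  next
    fix z assume z: "z \<in> disjoint_loop_pairs S"
    then obtain wr wb where zz: "z = (wr, wb)" by (cases z)
    have "card (fib S wr wb) = card (fib S {} {})" using fib_card[OF dom] z zz by simp
    moreover have "fib S {} {} \<noteq> {}"
    proof -
      let ?s = "restrict (\<lambda>_. True) (dom_faces S)"
      have "omega S ?s = {}" by (rule omega_const)
      hence "(?s, ?s) \<in> fib S {} {}" unfolding fib_iff using spins_restrict inner_boundary_def by auto
      thus ?thesis by blast
    qed
    moreover have "finite (fib S {} {})" using finite_A[OF fS] unfolding fib_def by simp
    ultimately have "fib S wr wb \<noteq> {}" by fastforce
    then obtain x where "x \<in> fib S wr wb" by blast
    hence x1: "x \<in> plus_const_configs S" "(\<lambda>(sr, sb). (omega S sr, omega S sb)) x = (wr, wb)"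
      unfolding fib_def by blast+
    show "z \<in> (\<lambda>(sr, sb). (omega S sr, omega S sb)) ` plus_const_configs S"
      unfolding zz by (rule image_eqI[where x = x and f = "\<lambda>(sr, sb). (omega S sr, omega S sb)", OF x1(2)[symmetric] x1(1)])
  qed
  fix b assume "b \<in> disjoint_loop_pairs S"
  then obtain wr wb where b: "b = (wr, wb)" "(wr, wb) \<in> disjoint_loop_pairs S" by (cases b) auto
  show "card {x \<in> plus_const_configs S. (\<lambda>(sr, sb). (omega S sr, omega S sb)) x = b} = card (fib S {} {})"
    using fib_card[OF dom b(2)] unfolding fib_def b(1) .
qed



lemma equiv_count:
  assumes eq: "equiv A r" and fA: "finite A"
  shows "card {X. X \<subseteq> A \<and> (\<forall>x\<in>X. \<forall>y. (x,y) \<in> r \<longrightarrow> y \<in> X)} = 2 ^ card (A // r)"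
proof -
  have fq: "finite (A // r)" using finite_quotient[OF fA equiv_type[OF eq]] .
  have inj: "inj_on Union (Pow (A // r))"
  proof (rule inj_onI)
    fix C C' assume C: "C \<in> Pow (A // r)" and C': "C' \<in> Pow (A // r)" and u: "\<Union>C = \<Union>C'"
    have sub: "D \<subseteq> D'" if D: "D \<subseteq> A // r" and D': "D' \<subseteq> A // r" and uu: "\<Union>D = \<Union>D'" for D D'
    proof
      fix c assume c: "c \<in> D"
      hence cq: "c \<in> A // r" using D by blast
      then obtain x where "x \<in> c" using in_quotient_imp_non_empty[OF eq] by blast
      hence "x \<in> \<Union>D'" using uu c by blast
      then obtain c' where c': "c' \<in> D'" "x \<in> c'" by blast
      have "c = c' \<or> c \<inter> c' = {}" using quotient_disj[OF eq cq] c'(1) D' by blast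
      thus "c \<in> D'" using c'(1) c'(2) \<open>x \<in> c\<close> by blast
    qed
    show "C = C'" using sub[of C C'] sub[of C' C] C C' u by blast
  qed
  have img: "Union ` Pow (A // r) = {X. X \<subseteq> A \<and> (\<forall>x\<in>X. \<forall>y. (x,y) \<in> r \<longrightarrow> y \<in> X)}"
  proof (intro equalityI subsetI)
    fix X assume "X \<in> Union ` Pow (A // r)"
    then obtain C where C: "C \<subseteq> A // r" "X = \<Union>C" by blast
    have "X \<subseteq> A" using C Union_quotient[OF eq] by blast
    moreover have "\<forall>x\<in>X. \<forall>y. (x,y) \<in> r \<longrightarrow> y \<in> X"
    proof (intro ballI allI impI)
      fix x y assume "x \<in> X" "(x,y) \<in> r"
      then obtain c where "c \<in> C" "x \<in> c" using C by blast
      hence "y \<in> c" using in_quotient_imp_closed[OF eq _ _ \<open>(x,y) \<in> r\<close>] C(1) by blast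
      thus "y \<in> X" using \<open>c \<in> C\<close> C(2) by blast
    qed
    ultimately show "X \<in> {X. X \<subseteq> A \<and> (\<forall>x\<in>X. \<forall>y. (x,y) \<in> r \<longrightarrow> y \<in> X)}" by blast
  next
    fix X assume "X \<in> {X. X \<subseteq> A \<and> (\<forall>x\<in>X. \<forall>y. (x,y) \<in> r \<longrightarrow> y \<in> X)}"
    hence X: "X \<subseteq> A" "\<forall>x\<in>X. \<forall>y. (x,y) \<in> r \<longrightarrow> y \<in> X" by blast+
    define C where "C = (\<lambda>x. r``{x}) ` X"
    have "C \<subseteq> A // r"
    proof
      fix c assume "c \<in> C"
      then obtain x where "x \<in> X" "c = r``{x}" unfolding C_def by blast
      thus "c \<in> A // r" using quotientI[of x A r] X(1) by blast
    qed
    moreover have "\<Union>C = X"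
    proof (intro equalityI subsetI)
      fix y assume "y \<in> \<Union>C"
      then obtain x where "x \<in> X" "y \<in> r``{x}" unfolding C_def by blast
      thus "y \<in> X" using X(2) by blast
    next
      fix y assume "y \<in> X"
      hence "y \<in> r``{y}" using equiv_class_self[OF eq] X(1) by blast
      thus "y \<in> \<Union>C" unfolding C_def using \<open>y \<in> X\<close> by blast
    qed
    ultimately show "X \<in> Union ` Pow (A // r)" by blast
  qed
  have "bij_betw Union (Pow (A // r)) {X. X \<subseteq> A \<and> (\<forall>x\<in>X. \<forall>y. (x,y) \<in> r \<longrightarrow> y \<in> X)}"
    unfolding bij_betw_def using inj img by blast
  hence "card {X. X \<subseteq> A \<and> (\<forall>x\<in>X. \<forall>y. (x,y) \<in> r \<longrightarrow> y \<in> X)} = card (Pow (A // r))"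
    by (simp add: bij_betw_same_card)
  thus ?thesis using card_Pow[OF fq] by simp
qed

definition Rel :: "hedge set \<Rightarrow> (hedge \<times> hedge) set" where
  "Rel \<omega> = {(e, e'). e \<in> \<omega> \<and> e' \<in> \<omega> \<and> (\<exists>t. is_hvertex t \<and> e \<subseteq> t \<and> e' \<subseteq> t)}"

lemma n_loops_Rel: "n_loops \<omega> = card (\<omega> // (Rel \<omega>)\<^sup>*)"
  unfolding n_loops_def Rel_def ..

lemma Rstar_in: assumes "(x,y) \<in> (Rel \<omega>)\<^sup>*" "x \<in> \<omega>" shows "y \<in> \<omega>"
  using assms by (induction rule: rtrancl_induct) (auto simp: Rel_def)

lemma loop_sub_dom: "loop_config S \<omega> \<Longrightarrow> \<omega> \<subseteq> dom_edges S"
  unfolding loop_config_def by blast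

lemma loop_par: "loop_config S \<omega> \<Longrightarrow> is_hvertex t \<Longrightarrow> even (card {e\<in>\<omega>. e \<subseteq> t})"
  unfolding loop_config_def by blast

lemma loop_fin: "finite S \<Longrightarrow> loop_config S \<omega> \<Longrightarrow> finite \<omega>"
  by (rule finite_subset[OF loop_sub_dom finite_dom_edges])

lemma dom_edge_card: "e \<in> dom_edges S \<Longrightarrow> card e = 2"
proof -
  assume "e \<in> dom_edges S"
  then obtain u v where "adj u v" "e = {u,v}" unfolding dom_edges_def by blast
  thus "card e = 2" using adj_neq by simp
qed

lemma three_choose_two: "(3::nat) choose 2 = 3"
  by (simp add: choose_two)

lemma deg_le3:
  assumes fS: "finite S" and lc: "loop_config S \<omega>" and t: "is_hvertex t"
  shows "card {e\<in>\<omega>. e \<subseteq> t} \<le> 3"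
proof -
  have ct: "card t = 3" using t unfolding is_hvertex_def by blast
  hence ft: "finite t" by (metis card.infinite zero_neq_numeral)
  have "{e\<in>\<omega>. e \<subseteq> t} \<subseteq> {B. B \<subseteq> t \<and> card B = 2}"
    using loop_sub_dom[OF lc] dom_edge_card by blast
  moreover have "finite {B. B \<subseteq> t \<and> card B = 2}" using ft by simp
  ultimately have "card {e\<in>\<omega>. e \<subseteq> t} \<le> card {B. B \<subseteq> t \<and> card B = 2}" by (rule card_mono[rotated])
  also have "\<dots> = 3" using n_subsets[OF ft, of 2] ct three_choose_two by simp
  finally show ?thesis .
qed

lemma R_closed:
  assumes fS: "finite S" and lw: "loop_config S \<omega>" and la: "loop_config S a" and sub: "a \<subseteq> \<omega>"
    and xy: "(x,y) \<in> Rel \<omega>" and x: "x \<in> a"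
  shows "y \<in> a"
proof (rule ccontr)
  assume ny: "y \<notin> a"
  obtain t where t: "is_hvertex t" "x \<subseteq> t" "y \<subseteq> t" and xw: "x \<in> \<omega>" and yw: "y \<in> \<omega>"
    using xy unfolding Rel_def by blast
  have xy': "x \<noteq> y" using x ny by blast
  define D where "D = {e\<in>\<omega>. e \<subseteq> t}"
  have fD: "finite D" unfolding D_def using loop_fin[OF fS lw] by simp
  have sD: "{x,y} \<subseteq> D" unfolding D_def using t xw yw by blast
  have "card {x,y} = 2" using xy' by simp
  hence "card D \<ge> 2" using card_mono[OF fD sD] by simp
  moreover have "card D \<le> 3" unfolding D_def by (rule deg_le3[OF fS lw t(1)])
  moreover have "even (card D)" unfolding D_def by (rule loop_par[OF lw t(1)])
  ultimately have "card D = 2" by presburger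
  hence Deq: "D = {x,y}" using card_subset_eq[OF fD sD] \<open>card {x,y} = 2\<close> by simp
  have "{e\<in>a. e \<subseteq> t} \<subseteq> D" unfolding D_def using sub by blast
  hence "{e\<in>a. e \<subseteq> t} = {x}" using Deq ny x t(2) by blast
  moreover have "even (card {e\<in>a. e \<subseteq> t})" by (rule loop_par[OF la t(1)])
  ultimately show False by simp
qed

lemma Rstar_closed:
  assumes fS: "finite S" and lw: "loop_config S \<omega>" and la: "loop_config S a" and sub: "a \<subseteq> \<omega>"
    and xy: "(x,y) \<in> (Rel \<omega>)\<^sup>*" and x: "x \<in> a"
  shows "y \<in> a"
  using xy x
proof (induction rule: rtrancl_induct)
  case base thus ?case .
next
  case (step y z) thus ?case using R_closed[OF fS lw la sub] by blast
qed

lemma closed_loop: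
  assumes lw: "loop_config S \<omega>" and sub: "a \<subseteq> \<omega>"
    and cl: "\<forall>x\<in>a. \<forall>y. (x,y) \<in> Rel \<omega> \<longrightarrow> y \<in> a"
  shows "loop_config S a"
  unfolding loop_config_def
proof (intro conjI allI impI)
  show "a \<subseteq> dom_edges S" using sub loop_sub_dom[OF lw] by blast
  fix t assume t: "is_hvertex t"
  show "even (card {e\<in>a. e \<subseteq> t})"
  proof (cases "{e\<in>a. e \<subseteq> t} = {}")
    case True
    hence "card {e\<in>a. e \<subseteq> t} = 0" by (simp only: card.empty)
    thus ?thesis by (simp only: even_zero)
  next
    case False
    then obtain x where x: "x \<in> a" "x \<subseteq> t" by blast
    have "{e\<in>a. e \<subseteq> t} = {e\<in>\<omega>. e \<subseteq> t}"
    proof (intro equalityI subsetI)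
      fix y assume "y \<in> {e\<in>\<omega>. e \<subseteq> t}"
      hence "(x,y) \<in> Rel \<omega>" unfolding Rel_def using x sub t by blast
      thus "y \<in> {e\<in>a. e \<subseteq> t}" using cl x \<open>y \<in> {e\<in>\<omega>. e \<subseteq> t}\<close> by blast
    qed (use sub in blast)
    thus ?thesis using loop_par[OF lw t] by simp
  qed
qed

lemma equiv_Rel: "equiv \<omega> ((Rel \<omega>)\<^sup>* \<inter> \<omega> \<times> \<omega>)"
proof -
  have s: "sym (Rel \<omega>)" unfolding Rel_def sym_def by blast
  have s2: "sym ((Rel \<omega>)\<^sup>*)" using sym_rtrancl[OF s] .
  show ?thesis unfolding equiv_def refl_on_def sym_def trans_def
  proof (intro conjI allI impI ballI)
    show "(Rel \<omega>)\<^sup>* \<inter> \<omega> \<times> \<omega> \<subseteq> \<omega> \<times> \<omega>" by blast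
  next
    fix x assume "x \<in> \<omega>" thus "(x,x) \<in> (Rel \<omega>)\<^sup>* \<inter> \<omega> \<times> \<omega>" by blast
  next
    fix x y assume "(x,y) \<in> (Rel \<omega>)\<^sup>* \<inter> \<omega> \<times> \<omega>"
    thus "(y,x) \<in> (Rel \<omega>)\<^sup>* \<inter> \<omega> \<times> \<omega>" using s2 unfolding sym_def by blast
  next
    fix x y z assume "(x,y) \<in> (Rel \<omega>)\<^sup>* \<inter> \<omega> \<times> \<omega>" "(y,z) \<in> (Rel \<omega>)\<^sup>* \<inter> \<omega> \<times> \<omega>"
    hence "(x,y) \<in> (Rel \<omega>)\<^sup>*" "(y,z) \<in> (Rel \<omega>)\<^sup>*" "x \<in> \<omega>" "z \<in> \<omega>" by blast+
    thus "(x,z) \<in> (Rel \<omega>)\<^sup>* \<inter> \<omega> \<times> \<omega>" using rtrancl_trans[of x y _ z] by blast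
  qed
qed

lemma quot_eq: "\<omega> // (Rel \<omega>)\<^sup>* = \<omega> // ((Rel \<omega>)\<^sup>* \<inter> \<omega> \<times> \<omega>)"
proof -
  have "(Rel \<omega>)\<^sup>* `` {x} = ((Rel \<omega>)\<^sup>* \<inter> \<omega> \<times> \<omega>) `` {x}" if "x \<in> \<omega>" for x
    using Rstar_in[of x _ \<omega>] that by blast
  thus ?thesis unfolding quotient_def by (intro SUP_cong) simp_all
qed

lemma count_sub:
  assumes fS: "finite S" and lw: "loop_config S \<omega>"
  shows "card {a. a \<subseteq> \<omega> \<and> loop_config S a} = 2 ^ n_loops \<omega>"
proof -
  let ?r = "(Rel \<omega>)\<^sup>* \<inter> \<omega> \<times> \<omega>"
  have "{a. a \<subseteq> \<omega> \<and> loop_config S a} = {X. X \<subseteq> \<omega> \<and> (\<forall>x\<in>X. \<forall>y. (x,y) \<in> ?r \<longrightarrow> y \<in> X)}"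
  proof (intro equalityI subsetI)
    fix a assume "a \<in> {a. a \<subseteq> \<omega> \<and> loop_config S a}"
    hence a: "a \<subseteq> \<omega>" "loop_config S a" by blast+
    show "a \<in> {X. X \<subseteq> \<omega> \<and> (\<forall>x\<in>X. \<forall>y. (x,y) \<in> ?r \<longrightarrow> y \<in> X)}"
      using Rstar_closed[OF fS lw a(2) a(1)] a(1) by blast
  next
    fix a assume "a \<in> {X. X \<subseteq> \<omega> \<and> (\<forall>x\<in>X. \<forall>y. (x,y) \<in> ?r \<longrightarrow> y \<in> X)}"
    hence a: "a \<subseteq> \<omega>" "\<forall>x\<in>a. \<forall>y. (x,y) \<in> ?r \<longrightarrow> y \<in> a" by blast+
    have "\<forall>x\<in>a. \<forall>y. (x,y) \<in> Rel \<omega> \<longrightarrow> y \<in> a"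
    proof (intro ballI allI impI)
      fix x y assume "x \<in> a" "(x,y) \<in> Rel \<omega>"
      moreover hence "(x,y) \<in> ?r" unfolding Rel_def by blast
      ultimately show "y \<in> a" using a(2) by blast
    qed
    thus "a \<in> {a. a \<subseteq> \<omega> \<and> loop_config S a}" using closed_loop[OF lw a(1)] a(1) by blast
  qed
  also have "card \<dots> = 2 ^ card (\<omega> // ?r)" using equiv_count[OF equiv_Rel loop_fin[OF fS lw]] .
  finally show ?thesis unfolding n_loops_Rel quot_eq .
qed



lemma lc_union:
  assumes fS: "finite S" and la: "loop_config S a" and lb: "loop_config S b" and d: "a \<inter> b = {}"
  shows "loop_config S (a \<union> b)"
  unfolding loop_config_def
proof (intro conjI allI impI)
  show "a \<union> b \<subseteq> dom_edges S" using loop_sub_dom[OF la] loop_sub_dom[OF lb] by blast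
  fix t assume t: "is_hvertex t"
  have eq: "{e\<in>a \<union> b. e \<subseteq> t} = {e\<in>a. e \<subseteq> t} \<union> {e\<in>b. e \<subseteq> t}" by blast
  have f: "finite {e\<in>a. e \<subseteq> t}" "finite {e\<in>b. e \<subseteq> t}" using loop_fin[OF fS la] loop_fin[OF fS lb] by simp_all
  have dd: "{e\<in>a. e \<subseteq> t} \<inter> {e\<in>b. e \<subseteq> t} = {}" using d by blast
  show "even (card {e\<in>a \<union> b. e \<subseteq> t})" unfolding eq card_Un_disjoint[OF f dd]
    using loop_par[OF la t] loop_par[OF lb t] by simp
qed

lemma lc_diff:
  assumes fS: "finite S" and lw: "loop_config S w" and la: "loop_config S a" and sub: "a \<subseteq> w"
  shows "loop_config S (w - a)"
  unfolding loop_config_def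
proof (intro conjI allI impI)
  show "w - a \<subseteq> dom_edges S" using loop_sub_dom[OF lw] by blast
  fix t assume t: "is_hvertex t"
  have eq: "{e\<in>w - a. e \<subseteq> t} = {e\<in>w. e \<subseteq> t} - {e\<in>a. e \<subseteq> t}" by blast
  have f: "finite {e\<in>a. e \<subseteq> t}" using loop_fin[OF fS la] by simp
  have s: "{e\<in>a. e \<subseteq> t} \<subseteq> {e\<in>w. e \<subseteq> t}" using sub by blast
  have fw: "finite {e\<in>w. e \<subseteq> t}" using loop_fin[OF fS lw] by simp
  have le: "card {e\<in>a. e \<subseteq> t} \<le> card {e\<in>w. e \<subseteq> t}" using card_mono[OF fw s] .
  show "even (card {e\<in>w - a. e \<subseteq> t})" unfolding eq card_Diff_subset[OF f s]
    using loop_par[OF la t] loop_par[OF lw t] le by simp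
qed

lemma fiber_union:
  assumes fS: "finite S"
  shows "disjoint_loop_pairs S \<inter> (\<lambda>(a, b). a \<union> b) -` {w} =
    (if loop_config S w then (\<lambda>a. (a, w - a)) ` {a. a \<subseteq> w \<and> loop_config S a} else {})"
proof (cases "loop_config S w")
  case True
  have "disjoint_loop_pairs S \<inter> (\<lambda>(a, b). a \<union> b) -` {w} = (\<lambda>a. (a, w - a)) ` {a. a \<subseteq> w \<and> loop_config S a}"
  proof (intro equalityI subsetI)
    fix z assume z: "z \<in> disjoint_loop_pairs S \<inter> (\<lambda>(a, b). a \<union> b) -` {w}"
    obtain a b where zz: "z = (a, b)" by (cases z)
    have h: "loop_config S a" "loop_config S b" "a \<inter> b = {}" "a \<union> b = w"
      using z unfolding zz disjoint_loop_pairs_def by simp_all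
    have "b = w - a" using h(3,4) by blast
    moreover have "a \<in> {a. a \<subseteq> w \<and> loop_config S a}" using h by blast
    ultimately show "z \<in> (\<lambda>a. (a, w - a)) ` {a. a \<subseteq> w \<and> loop_config S a}" unfolding zz by blast
  next
    fix z assume "z \<in> (\<lambda>a. (a, w - a)) ` {a. a \<subseteq> w \<and> loop_config S a}"
    then obtain a where a: "a \<subseteq> w" "loop_config S a" "z = (a, w - a)" by blast
    have "loop_config S (w - a)" using lc_diff[OF fS True a(2) a(1)] .
    moreover have "a \<union> (w - a) = w" using a(1) by blast
    ultimately show "z \<in> disjoint_loop_pairs S \<inter> (\<lambda>(a, b). a \<union> b) -` {w}"
      unfolding a(3) disjoint_loop_pairs_def using a(2) by simp
  qed
  thus ?thesis using True by simp
next
  case False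
  have "disjoint_loop_pairs S \<inter> (\<lambda>(a, b). a \<union> b) -` {w} = {}"
  proof (rule equals0I)
    fix z assume z: "z \<in> disjoint_loop_pairs S \<inter> (\<lambda>(a, b). a \<union> b) -` {w}"
    obtain a b where zz: "z = (a, b)" by (cases z)
    have h: "loop_config S a" "loop_config S b" "a \<inter> b = {}" "a \<union> b = w"
      using z unfolding zz disjoint_loop_pairs_def by simp_all
    show False using lc_union[OF fS h(1-3)] h(4) False by simp
  qed
  thus ?thesis using False by simp
qed

lemma card_fiber_union:
  assumes fS: "finite S"
  shows "card (disjoint_loop_pairs S \<inter> (\<lambda>(a, b). a \<union> b) -` {w}) =
    (if loop_config S w then 2 ^ n_loops w else 0)"
proof (cases "loop_config S w")
  case True
  have inj: "inj_on (\<lambda>a. (a, w - a)) {a. a \<subseteq> w \<and> loop_config S a}" by (rule inj_onI) simp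
  show ?thesis unfolding fiber_union[OF fS] using True card_image[OF inj] count_sub[OF fS True] by simp
next
  case False thus ?thesis unfolding fiber_union[OF fS] by simp
qed

lemma part2:
  assumes fS: "finite S"
  shows "pmf (map_pmf (\<lambda>(a, b). a \<union> b) (pmf_of_set (disjoint_loop_pairs S))) w = loop_O2 S w"
proof -
  let ?B = "disjoint_loop_pairs S"
  let ?L = "{w'. loop_config S w'}"
  let ?h = "\<lambda>(a::hedge set, b::hedge set). a \<union> b"
  have fL: "finite ?L"
  proof -
    have "?L \<subseteq> Pow (dom_edges S)" using loop_sub_dom by blast
    thus ?thesis using finite_dom_edges[OF fS] finite_subset by blast
  qed
  have fB: "finite ?B"
  proof -
    have "?B \<subseteq> Pow (dom_edges S) \<times> Pow (dom_edges S)" unfolding disjoint_loop_pairs_def using loop_sub_dom by blast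
    thus ?thesis using finite_dom_edges[OF fS] finite_subset by blast
  qed
  have nB: "?B \<noteq> {}"
  proof -
    have "loop_config S {}" unfolding loop_config_def by simp
    hence "({}, {}) \<in> ?B" unfolding disjoint_loop_pairs_def by simp
    thus ?thesis by blast
  qed
  have hB: "?h ` ?B \<subseteq> ?L"
  proof
    fix y assume "y \<in> ?h ` ?B"
    then obtain z where z: "z \<in> ?B" "y = ?h z" by blast
    obtain a b where "z = (a, b)" by (cases z)
    hence "(a, b) \<in> ?B" "y = a \<union> b" using z by simp_all
    thus "y \<in> ?L" using lc_union[OF fS] unfolding disjoint_loop_pairs_def by simp
  qed
  have "card ?B = (\<Sum>y\<in>?L. \<Sum>x\<in>{x\<in>?B. ?h x = y}. (1::nat))"
    using sum.group[OF fB fL hB, of "\<lambda>_. 1::nat"] by simp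
  also have "\<dots> = (\<Sum>y\<in>?L. card (?B \<inter> ?h -` {y}))"
  proof (rule sum.cong)
    fix y show "(\<Sum>x\<in>{x\<in>?B. ?h x = y}. (1::nat)) = card (?B \<inter> ?h -` {y})"
      by (simp add: Int_def vimage_def)
  qed simp
  also have "\<dots> = (\<Sum>y\<in>?L. 2 ^ n_loops y)"
    by (rule sum.cong) (simp_all add: card_fiber_union[OF fS])
  finally have cB: "real (card ?B) = (\<Sum>y\<in>?L. 2 ^ n_loops y)" by simp
  have "pmf (map_pmf ?h (pmf_of_set ?B)) w = real (card (?B \<inter> ?h -` {w})) / real (card ?B)"
    unfolding pmf_map measure_pmf_of_set[OF nB fB] ..
  also have "\<dots> = loop_O2 S w"
    unfolding cB card_fiber_union[OF fS] loop_O2_def by simp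
  finally show ?thesis .
qed


theorem proposition2p1:
  assumes "is_domain S"
  shows "map_pmf (\<lambda>(sr, sb). (omega S sr, omega S sb)) (mu_plus_const S)
           = pmf_of_set (disjoint_loop_pairs S) \<and>
         (\<forall>\<omega>. pmf (map_pmf (\<lambda>(sr, sb). omega S sr \<union> omega S sb) (mu_plus_const S)) \<omega>
           = loop_O2 S \<omega>)"
proof -
  have fS: "finite S" using assms unfolding is_domain_def by blast
  have p1: "map_pmf (\<lambda>(sr, sb). (omega S sr, omega S sb)) (mu_plus_const S) = pmf_of_set (disjoint_loop_pairs S)"
    by (rule part1[OF assms])
  have comp: "map_pmf (\<lambda>(sr, sb). omega S sr \<union> omega S sb) (mu_plus_const S) =
     map_pmf (\<lambda>(a, b). a \<union> b) (map_pmf (\<lambda>(sr, sb). (omega S sr, omega S sb)) (mu_plus_const S))"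
    by (simp add: map_pmf_comp split_def)
  show ?thesis using p1 part2[OF fS] comp by simp
qed

end
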